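(* Let $\mathbb W=(W,I,\preccurlyeq,\circ,{}^\sim,{}^-,{}^\neg)$ be a DqRA-frame. For upsets $U$ of $(W,\preccurlyeq)$ define ${\sim}U=\{w\mid w^-\notin U\}$, $-U=\{w\mid w^\sim\notin U\}$, and $\neg U=\{x\in W\mid x^\neg\notin U\}$. Then $\mathbb W^+=(\mathsf{Up}(W,\preccurlyeq),\cap,\cup,\circ,I,\sim,-,\neg)$ is a distributive quasi relation algebra (DqRA).
   Context: For a set $W$ and $\circ:W\times W\to\mathcal P(W)$, $U\circ V=\bigcup\{a\circ b\mid a\in U,b\in V\}$, $x\circ V=\{x\}\circ V$, $U\circ y=U\circ\{y\}$; superscripts compose left to right, e.g. $x^{\sim\neg}=(x^\sim)^\neg$. $\mathsf{Up}(W,\preccurlyeq)$ is the set of upsets. A DInFL-frame is a tuple $(W,I,\preccurlyeq,\circ,{}^\sim,{}^-)$ with $I\subseteq W$, $\preccurlyeq$ a partial order, $\circ:W\times W\to\mathcal P(W)$, ${}^\sim,{}^-:W\to W$, such that for all $u,v,x,y,z$: (F1) $x\preccurlyeq y$ iff $y\in I\circ x$ iff $y\in x\circ I$; (F2) $x\preccurlyeq y$, $x\in I$ imply $y\in I$; (F3) $x\preccurlyeq y$, $x\in u\circ v$ imply $y\in u\circ v$; (F4) $(x\circ y)\circ z=x\circ(y\circ z)$; (F5) $z^\sim\in x\circ y$ iff $y^-\in z\circ x$; (F6) $x^{\sim-}\preccurlyeq x$ and $x^{-\sim}\preccurlyeq x$. A DqRA-frame is a tuple $(W,I,\preccurlyeq,\circ,{}^\sim,{}^-,{}^\neg)$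 such that the first six components form a DInFL-frame and ${}^\neg:W\to W$ satisfies: (F7) $x^{\neg\neg}=x$; (F8) $x\preccurlyeq y$ implies $y^\neg\preccurlyeq x^\neg$; (F9) $z^-\in x\circ y$ iff $z^\neg\in y^{\sim\neg}\circ x^{\sim\neg}$. An InFL-algebra is $(A,\wedge,\vee,\cdot,1,\sim,-)$ with a lattice, a monoid, and $a\cdot b\leqslant c\iff a\leqslant -(b\cdot{\sim}c)\iff b\leqslant{\sim}(-c\cdot a)$; $a+b:=-({\sim}b\cdot{\sim}a)$. A quasi relation algebra is $(A,\wedge,\vee,\cdot,1,\sim,-,\neg)$ where the $\neg$-free reduct is an InFL-algebra, $\neg\neg a=a$, $\neg(a\wedge b)=\neg a\vee\neg b$, and $\neg(a\cdot b)=\neg a+\neg b$. A DqRA is a quasi relation algebra with distributive lattice reduct. *)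

theory Defs
  imports Main
begin

definition setcomp :: "('a \<Rightarrow> 'a \<Rightarrow> 'a set) \<Rightarrow> 'a set \<Rightarrow> 'a set \<Rightarrow> 'a set" where
  "setcomp c U V = (\<Union>a\<in>U. \<Union>b\<in>V. c a b)"

definition partial_order_on_set :: "'a set \<Rightarrow> ('a \<Rightarrow> 'a \<Rightarrow> bool) \<Rightarrow> bool" where
  "partial_order_on_set W le \<longleftrightarrow>
     (\<forall>x\<in>W. le x x) \<and>
     (\<forall>x\<in>W. \<forall>y\<in>W. \<forall>z\<in>W. le x y \<and> le y z \<longrightarrow> le x z) \<and>
     (\<forall>x\<in>W. \<forall>y\<in>W. le x y \<and> le y x \<longrightarrow> x = y)"

definition DInFL_frame ::
  "'a set \<Rightarrow> 'a set \<Rightarrow> ('a \<Rightarrow> 'a \<Rightarrow> bool) \<Rightarrow> ('a \<Rightarrow> 'a \<Rightarrow> 'a set)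
    \<Rightarrow> ('a \<Rightarrow> 'a) \<Rightarrow> ('a \<Rightarrow> 'a) \<Rightarrow> bool" where
  "DInFL_frame W I le c tld mn \<longleftrightarrow>
     I \<subseteq> W \<and> partial_order_on_set W le \<and>
     (\<forall>x\<in>W. \<forall>y\<in>W. c x y \<subseteq> W) \<and>
     (\<forall>x\<in>W. tld x \<in> W) \<and> (\<forall>x\<in>W. mn x \<in> W) \<and>
     \<comment> \<open>(F1)\<close>
     (\<forall>x\<in>W. \<forall>y\<in>W. (le x y \<longleftrightarrow> y \<in> setcomp c I {x}) \<and> (le x y \<longleftrightarrow> y \<in> setcomp c {x} I)) \<and>
     \<comment> \<open>(F2)\<close>
     (\<forall>x\<in>W. \<forall>y\<in>W. le x y \<and> x \<in> I \<longrightarrow> y \<in> I) \<and>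
     \<comment> \<open>(F3)\<close>
     (\<forall>u\<in>W. \<forall>v\<in>W. \<forall>x\<in>W. \<forall>y\<in>W. le x y \<and> x \<in> c u v \<longrightarrow> y \<in> c u v) \<and>
     \<comment> \<open>(F4)\<close>
     (\<forall>x\<in>W. \<forall>y\<in>W. \<forall>z\<in>W. setcomp c (c x y) {z} = setcomp c {x} (c y z)) \<and>
     \<comment> \<open>(F5)\<close>
     (\<forall>x\<in>W. \<forall>y\<in>W. \<forall>z\<in>W. tld z \<in> c x y \<longleftrightarrow> mn y \<in> c z x) \<and>
     \<comment> \<open>(F6)\<close>
     (\<forall>x\<in>W. le (mn (tld x)) x \<and> le (tld (mn x)) x)"

definition DqRA_frame ::
  "'a set \<Rightarrow> 'a set \<Rightarrow> ('a \<Rightarrow> 'a \<Rightarrow> bool) \<Rightarrow> ('a \<Rightarrow> 'a \<Rightarrow> 'a set)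
    \<Rightarrow> ('a \<Rightarrow> 'a) \<Rightarrow> ('a \<Rightarrow> 'a) \<Rightarrow> ('a \<Rightarrow> 'a) \<Rightarrow> bool" where
  "DqRA_frame W I le c tld mn ng \<longleftrightarrow>
     DInFL_frame W I le c tld mn \<and>
     (\<forall>x\<in>W. ng x \<in> W) \<and>
     \<comment> \<open>(F7)\<close>
     (\<forall>x\<in>W. ng (ng x) = x) \<and>
     \<comment> \<open>(F8)\<close>
     (\<forall>x\<in>W. \<forall>y\<in>W. le x y \<longrightarrow> le (ng y) (ng x)) \<and>
     \<comment> \<open>(F9)\<close>
     (\<forall>x\<in>W. \<forall>y\<in>W. \<forall>z\<in>W. mn z \<in> c x y \<longleftrightarrow> ng z \<in> c (ng (tld y)) (ng (tld x)))"

definition Up :: "'a set \<Rightarrow> ('a \<Rightarrow> 'a \<Rightarrow> bool) \<Rightarrow> 'a set set" where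
  "Up W le = {U. U \<subseteq> W \<and> (\<forall>x\<in>W. \<forall>y\<in>W. x \<in> U \<and> le x y \<longrightarrow> y \<in> U)}"

definition up_tilde :: "'a set \<Rightarrow> ('a \<Rightarrow> 'a) \<Rightarrow> 'a set \<Rightarrow> 'a set" where
  "up_tilde W mn U = {w\<in>W. mn w \<notin> U}"

definition up_minus :: "'a set \<Rightarrow> ('a \<Rightarrow> 'a) \<Rightarrow> 'a set \<Rightarrow> 'a set" where
  "up_minus W tld U = {w\<in>W. tld w \<notin> U}"

definition up_neg :: "'a set \<Rightarrow> ('a \<Rightarrow> 'a) \<Rightarrow> 'a set \<Rightarrow> 'a set" where
  "up_neg W ng U = {x\<in>W. ng x \<notin> U}"

definition lattice_on :: "'b set \<Rightarrow> ('b \<Rightarrow> 'b \<Rightarrow> 'b) \<Rightarrow> ('b \<Rightarrow> 'b \<Rightarrow> 'b) \<Rightarrow> bool" where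
  "lattice_on A mt jn \<longleftrightarrow>
     (\<forall>a\<in>A. \<forall>b\<in>A. mt a b \<in> A \<and> jn a b \<in> A) \<and>
     (\<forall>a\<in>A. \<forall>b\<in>A. mt a b = mt b a \<and> jn a b = jn b a) \<and>
     (\<forall>a\<in>A. \<forall>b\<in>A. \<forall>c\<in>A. mt (mt a b) c = mt a (mt b c) \<and> jn (jn a b) c = jn a (jn b c)) \<and>
     (\<forall>a\<in>A. \<forall>b\<in>A. mt a (jn a b) = a \<and> jn a (mt a b) = a)"

definition lat_le :: "('b \<Rightarrow> 'b \<Rightarrow> 'b) \<Rightarrow> 'b \<Rightarrow> 'b \<Rightarrow> bool" where
  "lat_le mt a b \<longleftrightarrow> mt a b = a"

definition monoid_on :: "'b set \<Rightarrow> ('b \<Rightarrow> 'b \<Rightarrow> 'b) \<Rightarrow> 'b \<Rightarrow> bool" where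
  "monoid_on A m e \<longleftrightarrow> e \<in> A \<and>
     (\<forall>a\<in>A. \<forall>b\<in>A. m a b \<in> A) \<and>
     (\<forall>a\<in>A. \<forall>b\<in>A. \<forall>c\<in>A. m (m a b) c = m a (m b c)) \<and>
     (\<forall>a\<in>A. m e a = a \<and> m a e = a)"

definition InFL_algebra ::
  "'b set \<Rightarrow> ('b \<Rightarrow> 'b \<Rightarrow> 'b) \<Rightarrow> ('b \<Rightarrow> 'b \<Rightarrow> 'b) \<Rightarrow> ('b \<Rightarrow> 'b \<Rightarrow> 'b) \<Rightarrow> 'b
    \<Rightarrow> ('b \<Rightarrow> 'b) \<Rightarrow> ('b \<Rightarrow> 'b) \<Rightarrow> bool" where
  "InFL_algebra A mt jn m e tld mn \<longleftrightarrow>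
     lattice_on A mt jn \<and> monoid_on A m e \<and>
     (\<forall>a\<in>A. tld a \<in> A \<and> mn a \<in> A) \<and>
     (\<forall>a\<in>A. \<forall>b\<in>A. \<forall>c\<in>A.
        (lat_le mt (m a b) c \<longleftrightarrow> lat_le mt a (mn (m b (tld c)))) \<and>
        (lat_le mt a (mn (m b (tld c))) \<longleftrightarrow> lat_le mt b (tld (m (mn c) a))))"

definition fis_plus :: "('b \<Rightarrow> 'b \<Rightarrow> 'b) \<Rightarrow> ('b \<Rightarrow> 'b) \<Rightarrow> ('b \<Rightarrow> 'b) \<Rightarrow> 'b \<Rightarrow> 'b \<Rightarrow> 'b" where
  "fis_plus m tld mn a b = mn (m (tld b) (tld a))"

definition qRA ::
  "'b set \<Rightarrow> ('b \<Rightarrow> 'b \<Rightarrow> 'b) \<Rightarrow> ('b \<Rightarrow> 'b \<Rightarrow> 'b) \<Rightarrow> ('b \<Rightarrow> 'b \<Rightarrow> 'b) \<Rightarrow> 'b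
    \<Rightarrow> ('b \<Rightarrow> 'b) \<Rightarrow> ('b \<Rightarrow> 'b) \<Rightarrow> ('b \<Rightarrow> 'b) \<Rightarrow> bool" where
  "qRA A mt jn m e tld mn ng \<longleftrightarrow>
     InFL_algebra A mt jn m e tld mn \<and>
     (\<forall>a\<in>A. ng a \<in> A) \<and>
     (\<forall>a\<in>A. ng (ng a) = a) \<and>
     (\<forall>a\<in>A. \<forall>b\<in>A. ng (mt a b) = jn (ng a) (ng b)) \<and>
     (\<forall>a\<in>A. \<forall>b\<in>A. ng (m a b) = fis_plus m tld mn (ng a) (ng b))"

definition DqRA ::
  "'b set \<Rightarrow> ('b \<Rightarrow> 'b \<Rightarrow> 'b) \<Rightarrow> ('b \<Rightarrow> 'b \<Rightarrow> 'b) \<Rightarrow> ('b \<Rightarrow> 'b \<Rightarrow> 'b) \<Rightarrow> 'b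
    \<Rightarrow> ('b \<Rightarrow> 'b) \<Rightarrow> ('b \<Rightarrow> 'b) \<Rightarrow> ('b \<Rightarrow> 'b) \<Rightarrow> bool" where
  "DqRA A mt jn m e tld mn ng \<longleftrightarrow>
     qRA A mt jn m e tld mn ng \<and>
     (\<forall>a\<in>A. \<forall>b\<in>A. \<forall>c\<in>A. mt a (jn b c) = jn (mt a b) (mt a c))"

end

theory Submission imports Defs begin

lemma setcomp_mem: "y \<in> setcomp c U V \<longleftrightarrow> (\<exists>a\<in>U. \<exists>b\<in>V. y \<in> c a b)"
  by (auto simp: setcomp_def)

locale fr =
  fixes W I :: "'a set" and le :: "'a \<Rightarrow> 'a \<Rightarrow> bool" and c :: "'a \<Rightarrow> 'a \<Rightarrow> 'a set"
    and tld mn ng :: "'a \<Rightarrow> 'a"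
  assumes fr: "DqRA_frame W I le c tld mn ng"
begin

lemma P0: "I \<subseteq> W" using fr unfolding DqRA_frame_def DInFL_frame_def by (elim conjE) assumption
lemma P1: "partial_order_on_set W le" using fr unfolding DqRA_frame_def DInFL_frame_def by (elim conjE) assumption
lemma P2: "\<forall>x\<in>W. \<forall>y\<in>W. c x y \<subseteq> W" using fr unfolding DqRA_frame_def DInFL_frame_def by (elim conjE) assumption
lemma P3: "\<forall>x\<in>W. tld x \<in> W" using fr unfolding DqRA_frame_def DInFL_frame_def by (elim conjE) assumption
lemma P4: "\<forall>x\<in>W. mn x \<in> W" using fr unfolding DqRA_frame_def DInFL_frame_def by (elim conjE) assumption
lemma P6: "\<forall>x\<in>W. \<forall>y\<in>W. le x y \<and> x \<in> I \<longrightarrow> y \<in> I" using fr unfolding DqRA_frame_def DInFL_frame_def by (elim conjE) assumption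
lemma P7: "\<forall>u\<in>W. \<forall>v\<in>W. \<forall>x\<in>W. \<forall>y\<in>W. le x y \<and> x \<in> c u v \<longrightarrow> y \<in> c u v" using fr unfolding DqRA_frame_def DInFL_frame_def by (elim conjE) assumption
lemma P8: "\<forall>x\<in>W. \<forall>y\<in>W. \<forall>z\<in>W. setcomp c (c x y) {z} = setcomp c {x} (c y z)" using fr unfolding DqRA_frame_def DInFL_frame_def by (elim conjE) assumption
lemma P9: "\<forall>x\<in>W. \<forall>y\<in>W. \<forall>z\<in>W. (tld z \<in> c x y) = (mn y \<in> c z x)" using fr unfolding DqRA_frame_def DInFL_frame_def by (elim conjE) assumption
lemma P10: "\<forall>x\<in>W. le (mn (tld x)) x \<and> le (tld (mn x)) x" using fr unfolding DqRA_frame_def DInFL_frame_def by (elim conjE) assumption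
lemma P11: "\<forall>x\<in>W. ng x \<in> W" using fr unfolding DqRA_frame_def DInFL_frame_def by (elim conjE) assumption
lemma P12: "\<forall>x\<in>W. ng (ng x) = x" using fr unfolding DqRA_frame_def DInFL_frame_def by (elim conjE) assumption
lemma P13: "\<forall>x\<in>W. \<forall>y\<in>W. le x y \<longrightarrow> le (ng y) (ng x)" using fr unfolding DqRA_frame_def DInFL_frame_def by (elim conjE) assumption
lemma P14: "\<forall>x\<in>W. \<forall>y\<in>W. \<forall>z\<in>W. (mn z \<in> c x y) = (ng z \<in> c (ng (tld y)) (ng (tld x)))" using fr unfolding DqRA_frame_def DInFL_frame_def by (elim conjE) assumption

lemma IW: "I \<subseteq> W" by (rule P0)
lemma refl: "x \<in> W \<Longrightarrow> le x x" using P1 unfolding partial_order_on_set_def by blast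
lemma antisym: "x \<in> W \<Longrightarrow> y \<in> W \<Longrightarrow> le x y \<Longrightarrow> le y x \<Longrightarrow> x = y"
  using P1 unfolding partial_order_on_set_def by blast
lemma cW: "x \<in> W \<Longrightarrow> y \<in> W \<Longrightarrow> z \<in> c x y \<Longrightarrow> z \<in> W" using P2 by blast
lemma tldW: "x \<in> W \<Longrightarrow> tld x \<in> W" using P3 by blast
lemma mnW: "x \<in> W \<Longrightarrow> mn x \<in> W" using P4 by blast
lemma ngW: "x \<in> W \<Longrightarrow> ng x \<in> W" using P11 by blast
lemma ngng: "x \<in> W \<Longrightarrow> ng (ng x) = x" using P12 by blast
lemma F8: "x \<in> W \<Longrightarrow> y \<in> W \<Longrightarrow> le x y \<Longrightarrow> le (ng y) (ng x)" using P13 by blast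
lemma F9: "x \<in> W \<Longrightarrow> y \<in> W \<Longrightarrow> z \<in> W \<Longrightarrow> mn z \<in> c x y \<longleftrightarrow> ng z \<in> c (ng (tld y)) (ng (tld x))"
  using P14 by blast

lemma F1: "\<forall>x\<in>W. \<forall>y\<in>W. le x y = (\<exists>a\<in>I. \<exists>b\<in>{x}. y \<in> c a b) \<and> le x y = (\<exists>a\<in>{x}. \<exists>b\<in>I. y \<in> c a b)"
  using fr unfolding DqRA_frame_def DInFL_frame_def setcomp_mem by (elim conjE) assumption

lemma F1a: assumes x: "x \<in> W" and y: "y \<in> W" shows "le x y \<longleftrightarrow> (\<exists>i\<in>I. y \<in> c i x)"
proof -
  have "le x y = (\<exists>a\<in>I. \<exists>b\<in>{x}. y \<in> c a b)" using bspec[OF bspec[OF F1 x] y] by (rule conjunct1)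
  then show ?thesis by simp
qed

lemma F1b: assumes x: "x \<in> W" and y: "y \<in> W" shows "le x y \<longleftrightarrow> (\<exists>i\<in>I. y \<in> c x i)"
proof -
  have "le x y = (\<exists>a\<in>{x}. \<exists>b\<in>I. y \<in> c a b)" using bspec[OF bspec[OF F1 x] y] by (rule conjunct2)
  then show ?thesis by simp
qed

lemma F2: "x \<in> W \<Longrightarrow> y \<in> W \<Longrightarrow> le x y \<Longrightarrow> x \<in> I \<Longrightarrow> y \<in> I" using P6 by blast
lemma F3: "u \<in> W \<Longrightarrow> v \<in> W \<Longrightarrow> x \<in> W \<Longrightarrow> y \<in> W \<Longrightarrow> le x y \<Longrightarrow> x \<in> c u v \<Longrightarrow> y \<in> c u v"
  using P7 by blast
lemma F4: "x \<in> W \<Longrightarrow> y \<in> W \<Longrightarrow> z \<in> W \<Longrightarrow> setcomp c (c x y) {z} = setcomp c {x} (c y z)"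
  using P8 by blast
lemma F5: "x \<in> W \<Longrightarrow> y \<in> W \<Longrightarrow> z \<in> W \<Longrightarrow> tld z \<in> c x y \<longleftrightarrow> mn y \<in> c z x"
  using P9 by blast
lemma F6: "x \<in> W \<Longrightarrow> le (mn (tld x)) x \<and> le (tld (mn x)) x"
  using P10 by blast

lemma mt: assumes x: "x \<in> W" shows "mn (tld x) = x"
proof -
  have tx: "tld x \<in> W" using tldW x .
  obtain i where i: "i \<in> I" "tld x \<in> c i (tld x)" using F1a[OF tx tx] refl[OF tx] by blast
  have iW: "i \<in> W" using IW i(1) by blast
  have "mn (tld x) \<in> c x i" using F5[OF iW tx x] i(2) by simp
  hence "le x (mn (tld x))" using F1b[OF x mnW[OF tx]] i(1) by blast
  thus ?thesis using F6[OF x] antisym[OF mnW[OF tx] x] by blast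
qed

lemma tm: assumes x: "x \<in> W" shows "tld (mn x) = x"
proof -
  have mx: "mn x \<in> W" using mnW x .
  obtain i where i: "i \<in> I" "mn x \<in> c (mn x) i" using F1b[OF mx mx] refl[OF mx] by blast
  have iW: "i \<in> W" using IW i(1) by blast
  have "tld (mn x) \<in> c i x" using F5[OF iW x mx] i(2) by simp
  hence "le x (tld (mn x))" using F1a[OF x tldW[OF mx]] i(1) by blast
  thus ?thesis using F6[OF x] antisym[OF tldW[OF mx] x] by blast
qed

lemma mn_anti: assumes x: "x \<in> W" and y: "y \<in> W" and "le x y" shows "le (mn y) (mn x)"
proof -
  obtain i where i: "i \<in> I" "y \<in> c i x" using F1a[OF x y] assms(3) by blast
  have iW: "i \<in> W" using IW i(1) by blast
  have "mn x \<in> c (mn y) i" using F5[OF iW x mnW[OF y]] i(2) tm[OF y] by simp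
  thus ?thesis using F1b[OF mnW[OF y] mnW[OF x]] i(1) by blast
qed

lemma tld_anti: assumes x: "x \<in> W" and y: "y \<in> W" and "le x y" shows "le (tld y) (tld x)"
proof -
  obtain i where i: "i \<in> I" "y \<in> c x i" using F1b[OF x y] assms(3) by blast
  have iW: "i \<in> W" using IW i(1) by blast
  have "tld x \<in> c i (tld y)" using F5[OF iW tldW[OF y] x] i(2) mt[OF y] by simp
  thus ?thesis using F1a[OF tldW[OF y] tldW[OF x]] i(1) by blast
qed

lemma Up_iff: "U \<in> Up W le \<longleftrightarrow> U \<subseteq> W \<and> (\<forall>x\<in>W. \<forall>y\<in>W. x \<in> U \<and> le x y \<longrightarrow> y \<in> U)"
  by (simp add: Up_def)

lemma tilde_Up: assumes "U \<in> Up W le" shows "up_tilde W mn U \<in> Up W le"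
  unfolding Up_iff up_tilde_def
proof (intro conjI ballI impI)
  fix x y assume x: "x \<in> W" and y: "y \<in> W" and h: "x \<in> {w \<in> W. mn w \<notin> U} \<and> le x y"
  have "le (mn y) (mn x)" using mn_anti[OF x y] h by blast
  then show "y \<in> {w \<in> W. mn w \<notin> U}" using assms h y mnW[OF x] mnW[OF y] unfolding Up_iff by blast
qed auto

lemma minus_Up: assumes "U \<in> Up W le" shows "up_minus W tld U \<in> Up W le"
  unfolding Up_iff up_minus_def
proof (intro conjI ballI impI)
  fix x y assume x: "x \<in> W" and y: "y \<in> W" and h: "x \<in> {w \<in> W. tld w \<notin> U} \<and> le x y"
  have "le (tld y) (tld x)" using tld_anti[OF x y] h by blast
  then show "y \<in> {w \<in> W. tld w \<notin> U}" using assms h y tldW[OF x] tldW[OF y] unfolding Up_iff by blast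
qed auto

lemma neg_Up: assumes "U \<in> Up W le" shows "up_neg W ng U \<in> Up W le"
  unfolding Up_iff up_neg_def
proof (intro conjI ballI impI)
  fix x y assume x: "x \<in> W" and y: "y \<in> W" and h: "x \<in> {w \<in> W. ng w \<notin> U} \<and> le x y"
  have "le (ng y) (ng x)" using F8[OF x y] h by blast
  then show "y \<in> {w \<in> W. ng w \<notin> U}" using assms h y ngW[OF x] ngW[OF y] unfolding Up_iff by blast
qed auto

lemma comp_Up: assumes "U \<in> Up W le" "V \<in> Up W le" shows "setcomp c U V \<in> Up W le"
  unfolding Up_iff
proof (intro conjI ballI impI)
  show "setcomp c U V \<subseteq> W" using assms cW unfolding Up_iff setcomp_def by blast
next
  fix x y assume x: "x \<in> W" and y: "y \<in> W" and h: "x \<in> setcomp c U V \<and> le x y"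
  then obtain a b where ab: "a \<in> U" "b \<in> V" "x \<in> c a b" by (auto simp: setcomp_mem)
  have "a \<in> W" "b \<in> W" using ab assms unfolding Up_iff by blast+
  then have "y \<in> c a b" using F3[OF _ _ x y] h ab by blast
  then show "y \<in> setcomp c U V" using ab by (auto simp: setcomp_mem)
qed

lemma I_Up: "I \<in> Up W le"
  unfolding Up_iff using IW F2 by blast

lemma key4: assumes "u \<in> W" "v \<in> W" "z \<in> W"
  shows "(\<exists>x\<in>c u v. y \<in> c x z) \<longleftrightarrow> (\<exists>w\<in>c v z. y \<in> c u w)"
proof -
  have "y \<in> setcomp c (c u v) {z} \<longleftrightarrow> y \<in> setcomp c {u} (c v z)" using F4[OF assms] by simp
  then show ?thesis by (simp add: setcomp_mem)
qed

lemma assoc: assumes "U \<subseteq> W" "V \<subseteq> W" "C \<subseteq> W"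
  shows "setcomp c (setcomp c U V) C = setcomp c U (setcomp c V C)"
proof (rule set_eqI)
  fix y
  show "y \<in> setcomp c (setcomp c U V) C \<longleftrightarrow> y \<in> setcomp c U (setcomp c V C)"
  proof
    assume "y \<in> setcomp c (setcomp c U V) C"
    then obtain u v x z where h: "u \<in> U" "v \<in> V" "x \<in> c u v" "z \<in> C" "y \<in> c x z"
      by (auto simp: setcomp_mem)
    then obtain w where w: "w \<in> c v z" "y \<in> c u w" using key4[of u v z y] assms by blast
    have "w \<in> setcomp c V C" using w(1) h unfolding setcomp_mem by blast
    then show "y \<in> setcomp c U (setcomp c V C)" using h(1) w(2) unfolding setcomp_mem[of y] by blast
  next
    assume "y \<in> setcomp c U (setcomp c V C)"
    then obtain u v w z where h: "u \<in> U" "v \<in> V" "w \<in> c v z" "z \<in> C" "y \<in> c u w"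
      by (auto simp: setcomp_mem)
    then obtain x where x: "x \<in> c u v" "y \<in> c x z" using key4[of u v z y] assms by blast
    have "x \<in> setcomp c U V" using x(1) h unfolding setcomp_mem by blast
    then show "y \<in> setcomp c (setcomp c U V) C" using h(4) x(2) unfolding setcomp_mem[of y] by blast
  qed
qed

lemma unitL: assumes "U \<in> Up W le" shows "setcomp c I U = U"
proof (rule set_eqI)
  fix y
  have UW: "U \<subseteq> W" using assms Up_iff by blast
  show "y \<in> setcomp c I U \<longleftrightarrow> y \<in> U"
  proof
    assume "y \<in> setcomp c I U"
    then obtain i u where h: "i \<in> I" "u \<in> U" "y \<in> c i u" by (auto simp: setcomp_mem)
    have uW: "u \<in> W" using UW h by blast
    have yW: "y \<in> W" using cW[OF _ uW h(3)] IW h(1) by blast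
    have "le u y" using F1a[OF uW yW] h by blast
    then show "y \<in> U" using assms uW yW h(2) unfolding Up_iff by blast
  next
    assume "y \<in> U"
    then have yW: "y \<in> W" using UW by blast
    then obtain i where "i \<in> I" "y \<in> c i y" using F1a[OF yW yW] refl by blast
    then show "y \<in> setcomp c I U" using \<open>y \<in> U\<close> by (auto simp: setcomp_mem)
  qed
qed

lemma unitR: assumes "U \<in> Up W le" shows "setcomp c U I = U"
proof (rule set_eqI)
  fix y
  have UW: "U \<subseteq> W" using assms Up_iff by blast
  show "y \<in> setcomp c U I \<longleftrightarrow> y \<in> U"
  proof
    assume "y \<in> setcomp c U I"
    then obtain i u where h: "i \<in> I" "u \<in> U" "y \<in> c u i" by (auto simp: setcomp_mem)
    have uW: "u \<in> W" using UW h by blast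
    have yW: "y \<in> W" using cW[OF uW _ h(3)] IW h(1) by blast
    have "le u y" using F1b[OF uW yW] h by blast
    then show "y \<in> U" using assms uW yW h(2) unfolding Up_iff by blast
  next
    assume "y \<in> U"
    then have yW: "y \<in> W" using UW by blast
    then obtain i where "i \<in> I" "y \<in> c y i" using F1b[OF yW yW] refl by blast
    then show "y \<in> setcomp c U I" using \<open>y \<in> U\<close> by (auto simp: setcomp_mem)
  qed
qed

lemma res1: assumes UW: "U \<subseteq> W" and VW: "V \<subseteq> W"
  shows "setcomp c U V \<subseteq> C \<longleftrightarrow> U \<subseteq> up_minus W tld (setcomp c V (up_tilde W mn C))"
proof
  assume h: "setcomp c U V \<subseteq> C"
  show "U \<subseteq> up_minus W tld (setcomp c V (up_tilde W mn C))"
  proof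
    fix u assume u: "u \<in> U"
    have uW: "u \<in> W" using u UW by blast
    have "tld u \<notin> setcomp c V (up_tilde W mn C)"
    proof
      assume "tld u \<in> setcomp c V (up_tilde W mn C)"
      then obtain v w where vw: "v \<in> V" "w \<in> W" "mn w \<notin> C" "tld u \<in> c v w"
        by (auto simp: setcomp_mem up_tilde_def)
      have "mn w \<in> c u v" using F5[OF _ vw(2) uW] vw VW by blast
      then have "mn w \<in> setcomp c U V" using u vw(1) unfolding setcomp_mem by blast
      then show False using h vw(3) by blast
    qed
    then show "u \<in> up_minus W tld (setcomp c V (up_tilde W mn C))" using uW by (simp add: up_minus_def)
  qed
next
  assume h: "U \<subseteq> up_minus W tld (setcomp c V (up_tilde W mn C))"
  show "setcomp c U V \<subseteq> C"
  proof
    fix y assume "y \<in> setcomp c U V"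
    then obtain u v where uv: "u \<in> U" "v \<in> V" "y \<in> c u v" by (auto simp: setcomp_mem)
    have uW: "u \<in> W" and vW: "v \<in> W" using uv UW VW by blast+
    have yW: "y \<in> W" using cW[OF uW vW uv(3)] .
    show "y \<in> C"
    proof (rule ccontr)
      assume nC: "y \<notin> C"
      have tW: "tld y \<in> W" using tldW[OF yW] .
      have "tld y \<in> up_tilde W mn C" using nC tW mt[OF yW] by (simp add: up_tilde_def)
      moreover have "tld u \<in> c v (tld y)" using F5[OF vW tW uW] mt[OF yW] uv(3) by simp
      ultimately have "tld u \<in> setcomp c V (up_tilde W mn C)" using uv(2) by (auto simp: setcomp_mem)
      then show False using h uv(1) by (auto simp: up_minus_def)
    qed
  qed
qed

lemma res2: assumes UW: "U \<subseteq> W" and VW: "V \<subseteq> W"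
  shows "setcomp c U V \<subseteq> C \<longleftrightarrow> V \<subseteq> up_tilde W mn (setcomp c (up_minus W tld C) U)"
proof
  assume h: "setcomp c U V \<subseteq> C"
  show "V \<subseteq> up_tilde W mn (setcomp c (up_minus W tld C) U)"
  proof
    fix v assume v: "v \<in> V"
    have vW: "v \<in> W" using v VW by blast
    have "mn v \<notin> setcomp c (up_minus W tld C) U"
    proof
      assume "mn v \<in> setcomp c (up_minus W tld C) U"
      then obtain w u where wu: "w \<in> W" "tld w \<notin> C" "u \<in> U" "mn v \<in> c w u"
        by (auto simp: setcomp_mem up_minus_def)
      have "tld w \<in> c u v" using F5[OF _ vW wu(1)] wu UW by blast
      then have "tld w \<in> setcomp c U V" using v wu(3) unfolding setcomp_mem by blast
      then show False using h wu(2) by blast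
    qed
    then show "v \<in> up_tilde W mn (setcomp c (up_minus W tld C) U)" using vW by (simp add: up_tilde_def)
  qed
next
  assume h: "V \<subseteq> up_tilde W mn (setcomp c (up_minus W tld C) U)"
  show "setcomp c U V \<subseteq> C"
  proof
    fix y assume "y \<in> setcomp c U V"
    then obtain u v where uv: "u \<in> U" "v \<in> V" "y \<in> c u v" by (auto simp: setcomp_mem)
    have uW: "u \<in> W" and vW: "v \<in> W" using uv UW VW by blast+
    have yW: "y \<in> W" using cW[OF uW vW uv(3)] .
    show "y \<in> C"
    proof (rule ccontr)
      assume nC: "y \<notin> C"
      have mW: "mn y \<in> W" using mnW[OF yW] .
      have "mn y \<in> up_minus W tld C" using nC mW tm[OF yW] by (simp add: up_minus_def)
      moreover have "mn v \<in> c (mn y) u" using F5[OF uW vW mW] tm[OF yW] uv(3) by simp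
      ultimately have "mn v \<in> setcomp c (up_minus W tld C) U" using uv(1) by (auto simp: setcomp_mem)
      then show False using h uv(2) by (auto simp: up_tilde_def)
    qed
  qed
qed

lemma minus_refl: assumes "X \<subseteq> W" "Y \<subseteq> W" "up_minus W tld X \<subseteq> up_minus W tld Y" shows "Y \<subseteq> X"
proof
  fix y assume y: "y \<in> Y"
  have yW: "y \<in> W" using y assms by blast
  show "y \<in> X"
  proof (rule ccontr)
    assume "y \<notin> X"
    then have "mn y \<in> up_minus W tld X" using tm[OF yW] mnW[OF yW] by (simp add: up_minus_def)
    then have "mn y \<in> up_minus W tld Y" using assms by blast
    then show False using tm[OF yW] y by (simp add: up_minus_def)
  qed
qed

lemma minus_mono: "X \<subseteq> Y \<Longrightarrow> up_minus W tld Y \<subseteq> up_minus W tld X"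
  by (auto simp: up_minus_def)

lemma plus_eq: assumes X: "X \<in> Up W le" and Y: "Y \<in> Up W le"
  shows "up_minus W tld (setcomp c (up_tilde W mn X) (up_tilde W mn Y))
       = up_tilde W mn (setcomp c (up_minus W tld X) (up_minus W tld Y))"
proof -
  have XW: "X \<subseteq> W" and YW: "Y \<subseteq> W" using X Y Up_iff by blast+
  have tXW: "up_tilde W mn X \<subseteq> W" and mYW: "up_minus W tld Y \<subseteq> W"
    by (auto simp: up_tilde_def up_minus_def)
  have eq: "D \<subseteq> up_minus W tld (setcomp c (up_tilde W mn X) (up_tilde W mn Y))
        \<longleftrightarrow> D \<subseteq> up_tilde W mn (setcomp c (up_minus W tld X) (up_minus W tld Y))"
    if DW: "D \<subseteq> W" for D
  proof -
    have a: "D \<subseteq> up_minus W tld (setcomp c (up_tilde W mn X) (up_tilde W mn Y))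
          \<longleftrightarrow> setcomp c D (up_tilde W mn X) \<subseteq> Y" using res1[OF DW tXW] by simp
    have b: "D \<subseteq> up_tilde W mn (setcomp c (up_minus W tld X) (up_minus W tld Y))
          \<longleftrightarrow> setcomp c (up_minus W tld Y) D \<subseteq> X" using res2[OF mYW DW] by simp
    have cc: "setcomp c (up_minus W tld Y) D \<subseteq> X
          \<longleftrightarrow> up_minus W tld Y \<subseteq> up_minus W tld (setcomp c D (up_tilde W mn X))"
      using res1[OF mYW DW] by simp
    have sW: "setcomp c D (up_tilde W mn X) \<subseteq> W"
      using cW DW tXW unfolding setcomp_def by blast
    have d: "up_minus W tld Y \<subseteq> up_minus W tld (setcomp c D (up_tilde W mn X))
          \<longleftrightarrow> setcomp c D (up_tilde W mn X) \<subseteq> Y"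
      using minus_refl[OF YW sW] minus_mono by blast
    show ?thesis using a b cc d by blast
  qed
  have w1: "up_minus W tld (setcomp c (up_tilde W mn X) (up_tilde W mn Y)) \<subseteq> W"
    by (auto simp: up_minus_def)
  have w2: "up_tilde W mn (setcomp c (up_minus W tld X) (up_minus W tld Y)) \<subseteq> W"
    by (auto simp: up_tilde_def)
  show ?thesis using eq[OF w1] eq[OF w2] by blast
qed

lemma neg_comp: assumes UW: "U \<subseteq> W" and VW: "V \<subseteq> W"
  shows "up_neg W ng (setcomp c U V)
       = up_tilde W mn (setcomp c (up_minus W tld (up_neg W ng V)) (up_minus W tld (up_neg W ng U)))"
proof -
  have key: "ng x \<in> setcomp c U V \<longleftrightarrow> mn x \<in> setcomp c (up_minus W tld (up_neg W ng V)) (up_minus W tld (up_neg W ng U))"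
    if x: "x \<in> W" for x
  proof
    assume "ng x \<in> setcomp c U V"
    then obtain u v where uv: "u \<in> U" "v \<in> V" "ng x \<in> c u v" by (auto simp: setcomp_mem)
    have uW: "u \<in> W" and vW: "v \<in> W" using uv UW VW by blast+
    define a where "a = mn (ng v)"
    define b where "b = mn (ng u)"
    have aW: "a \<in> W" and bW: "b \<in> W" unfolding a_def b_def using mnW ngW uW vW by blast+
    have ta: "ng (tld a) = v" unfolding a_def using tm[OF ngW[OF vW]] ngng[OF vW] by simp
    have tb: "ng (tld b) = u" unfolding b_def using tm[OF ngW[OF uW]] ngng[OF uW] by simp
    have "mn x \<in> c a b" using F9[OF aW bW x] ta tb uv(3) by simp
    moreover have "a \<in> up_minus W tld (up_neg W ng V)" using aW ta uv(2) tldW[OF aW]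
      by (auto simp: up_minus_def up_neg_def)
    moreover have "b \<in> up_minus W tld (up_neg W ng U)" using bW tb uv(1) tldW[OF bW]
      by (auto simp: up_minus_def up_neg_def)
    ultimately show "mn x \<in> setcomp c (up_minus W tld (up_neg W ng V)) (up_minus W tld (up_neg W ng U))"
      by (auto simp: setcomp_mem)
  next
    assume "mn x \<in> setcomp c (up_minus W tld (up_neg W ng V)) (up_minus W tld (up_neg W ng U))"
    then obtain a b where ab: "a \<in> W" "b \<in> W" "ng (tld a) \<in> V" "ng (tld b) \<in> U" "mn x \<in> c a b"
      using tldW by (auto simp: setcomp_mem up_minus_def up_neg_def)
    have "ng x \<in> c (ng (tld b)) (ng (tld a))" using F9[OF ab(1,2) x] ab(5) by simp
    then show "ng x \<in> setcomp c U V" using ab by (auto simp: setcomp_mem)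
  qed
  show ?thesis
  proof (rule set_eqI)
    fix x
    show "x \<in> up_neg W ng (setcomp c U V) \<longleftrightarrow>
      x \<in> up_tilde W mn (setcomp c (up_minus W tld (up_neg W ng V)) (up_minus W tld (up_neg W ng U)))"
      using key[of x] by (simp only: up_neg_def[of W ng "setcomp c U V"] up_tilde_def mem_Collect_eq) blast
  qed
qed

lemma neg_neg: "U \<subseteq> W \<Longrightarrow> up_neg W ng (up_neg W ng U) = U"
  using ngW ngng by (auto simp: up_neg_def)

lemma neg_inter: "up_neg W ng (U \<inter> V) = up_neg W ng U \<union> up_neg W ng V"
  by (auto simp: up_neg_def)

lemma neg_mult: assumes "U \<in> Up W le" "V \<in> Up W le"
  shows "up_neg W ng (setcomp c U V) = fis_plus (setcomp c) (up_tilde W mn) (up_minus W tld) (up_neg W ng U) (up_neg W ng V)"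
proof -
  have UW: "U \<subseteq> W" and VW: "V \<subseteq> W" using assms Up_iff by blast+
  show ?thesis unfolding fis_plus_def
    using plus_eq[OF neg_Up[OF assms(2)] neg_Up[OF assms(1)]] neg_comp[OF UW VW] by simp
qed

theorem main: "DqRA (Up W le) (\<inter>) (\<union>) (setcomp c) I
           (up_tilde W mn) (up_minus W tld) (up_neg W ng)"
proof -
  have capU: "A \<inter> B \<in> Up W le" if "A \<in> Up W le" "B \<in> Up W le" for A B
    using that unfolding Up_iff by blast
  have cupU: "A \<union> B \<in> Up W le" if "A \<in> Up W le" "B \<in> Up W le" for A B
    using that unfolding Up_iff by blast
  have sub: "A \<subseteq> W" if "A \<in> Up W le" for A using that Up_iff by blast
  have lat: "lattice_on (Up W le) (\<inter>) (\<union>)"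
    unfolding lattice_on_def
  proof (intro conjI ballI)
  qed (auto intro: capU cupU)
  have mon: "monoid_on (Up W le) (setcomp c) I"
    unfolding monoid_on_def
  proof (intro conjI ballI I_Up comp_Up)
    fix a b d assume "a \<in> Up W le" "b \<in> Up W le" "d \<in> Up W le"
    then show "setcomp c (setcomp c a b) d = setcomp c a (setcomp c b d)" using assoc sub by blast
  next
    fix a assume "a \<in> Up W le"
    then show "setcomp c I a = a" "setcomp c a I = a" by (rule unitL, rule unitR)
  qed
  have infl: "InFL_algebra (Up W le) (\<inter>) (\<union>) (setcomp c) I (up_tilde W mn) (up_minus W tld)"
    unfolding InFL_algebra_def
  proof (intro conjI ballI lat mon)
    fix a assume "a \<in> Up W le"
    then show "up_tilde W mn a \<in> Up W le" "up_minus W tld a \<in> Up W le"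
      by (rule tilde_Up, rule minus_Up)
  next
    fix a b d assume h: "a \<in> Up W le" "b \<in> Up W le" "d \<in> Up W le"
    have aW: "a \<subseteq> W" and bW: "b \<subseteq> W" using h sub by blast+
    have e: "lat_le (\<inter>) X Y \<longleftrightarrow> X \<subseteq> Y" for X Y :: "'a set" by (auto simp: lat_le_def)
    show "lat_le (\<inter>) (setcomp c a b) d = lat_le (\<inter>) a (up_minus W tld (setcomp c b (up_tilde W mn d)))"
      unfolding e using res1[OF aW bW] .
    show "lat_le (\<inter>) a (up_minus W tld (setcomp c b (up_tilde W mn d))) =
        lat_le (\<inter>) b (up_tilde W mn (setcomp c (up_minus W tld d) a))"
      unfolding e using res1[OF aW bW] res2[OF aW bW] by simp
  qed
  show ?thesis unfolding DqRA_def qRA_def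
  proof (intro conjI ballI infl)
    fix a b d assume h: "a \<in> Up W le" "b \<in> Up W le" "d \<in> Up W le"
    show "a \<inter> (b \<union> d) = a \<inter> b \<union> a \<inter> d" by blast
  next
    fix a assume "a \<in> Up W le"
    then show "up_neg W ng a \<in> Up W le" "up_neg W ng (up_neg W ng a) = a"
      by (rule neg_Up, rule neg_neg[OF sub])
  next
    fix a b assume h: "a \<in> Up W le" "b \<in> Up W le"
    show "up_neg W ng (a \<inter> b) = up_neg W ng a \<union> up_neg W ng b" by (rule neg_inter)
    show "up_neg W ng (setcomp c a b) = fis_plus (setcomp c) (up_tilde W mn) (up_minus W tld) (up_neg W ng a) (up_neg W ng b)"
      by (rule neg_mult[OF h])
  qed
qed

end

theorem mainTheorem9:
  fixes W I :: "'a set" and le :: "'a \<Rightarrow> 'a \<Rightarrow> bool" and c :: "'a \<Rightarrow> 'a \<Rightarrow> 'a set"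
    and tld mn ng :: "'a \<Rightarrow> 'a"
  assumes "DqRA_frame W I le c tld mn ng"
  shows "DqRA (Up W le) (\<inter>) (\<union>) (setcomp c) I
           (up_tilde W mn) (up_minus W tld) (up_neg W ng)"
proof -
  interpret fr W I le c tld mn ng using assms by (unfold_locales)
  show ?thesis by (rule main)
qed

end
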